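(* Consider the system, with state $(s,e,v,q,c)$ in $\Omega=\{(s,e,v,q,c)\in\mathbb{R}_+^5: q\ge q_{\min}\}$, $$\dot s=-\tfrac1\gamma\varphi(s)e+d(s_{\rm in}-s),\quad \dot e=(1-\alpha)\varphi(s)e-de,\quad \dot v=\alpha\beta\varphi(s)e-\rho(v)c-dv,$$ $$\dot q=\rho(v)-\mu(q)q,\quad \dot c=\mu(q)c-dc,$$ with constant controls $\alpha\in(0,1)$ and $d>0$. Then the system has an equilibrium in $\Omega$ with $e>0$ and $c>0$ if and only if $d<\min\{(1-\alpha)\varphi_{\max},\psi_{\max}\}$ and $$\varphi^{-1}\!\left(\frac{d}{1-\alpha}\right)+\frac{\psi^{-1}(d)}{\alpha\beta\gamma}<s_{\rm in}.$$ In that case this equilibrium is unique and equals $(s^*,e^*,v^*,q^*,c^* )$ with $s^*=\varphi^{-1}(d/(1-\alpha))$, $e^*=(1-\alpha)\gamma(s_{\rm in}-s^* )$, $v^*=\psi^{-1}(d)$, $q^*=\mu^{-1}(d)$, $c^*=(v_{\rm in}^*-v^* )/q^*$ where $v_{\rm in}^*=\alpha\beta\gamma(s_{\rm in}-s^* )$.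
   Context: All parameters $s_{\rm in},\gamma,\beta,\varphi_{\max},k_s,\rho_{\max},k_v,q_{\min},\mu_{\max}$ are strictly positive. $\varphi(s)=\frac{\varphi_{\max}s}{k_s+s}$, $\rho(v)=\frac{\rho_{\max}v}{k_v+v}$ on $[0,\infty)$, $\mu(q)=\mu_{\max}(1-q_{\min}/q)$ on $[q_{\min},\infty)$. Inverses $\varphi^{-1}:[0,\varphi_{\max})\to[0,\infty)$, $\mu^{-1}:[0,\mu_{\max})\to[q_{\min},\infty)$, $\rho^{-1}:[0,\rho_{\max})\to[0,\infty)$. $\psi_{\max}=\frac{\mu_{\max}\rho_{\max}}{\rho_{\max}+q_{\min}\mu_{\max}}$ and $\psi^{-1}(y)=\rho^{-1}(y\,\mu^{-1}(y))$ for $y\in[0,\psi_{\max})$. *)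

theory Defs
  imports Complex_Main
begin

definition phi :: "real \<Rightarrow> real \<Rightarrow> real \<Rightarrow> real" where
  "phi phimax ks s = phimax * s / (ks + s)"

definition rho :: "real \<Rightarrow> real \<Rightarrow> real \<Rightarrow> real" where
  "rho rhomax kv v = rhomax * v / (kv + v)"

definition mu :: "real \<Rightarrow> real \<Rightarrow> real \<Rightarrow> real" where
  "mu mumax qmin q = mumax * (1 - qmin / q)"

definition phi_inv :: "real \<Rightarrow> real \<Rightarrow> real \<Rightarrow> real" where
  "phi_inv phimax ks = the_inv_into {0..} (phi phimax ks)"

definition rho_inv :: "real \<Rightarrow> real \<Rightarrow> real \<Rightarrow> real" where
  "rho_inv rhomax kv = the_inv_into {0..} (rho rhomax kv)"

definition mu_inv :: "real \<Rightarrow> real \<Rightarrow> real \<Rightarrow> real" where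
  "mu_inv mumax qmin = the_inv_into {qmin..} (mu mumax qmin)"

definition psi_max :: "real \<Rightarrow> real \<Rightarrow> real \<Rightarrow> real" where
  "psi_max mumax rhomax qmin = mumax * rhomax / (rhomax + qmin * mumax)"

definition psi_inv :: "real \<Rightarrow> real \<Rightarrow> real \<Rightarrow> real \<Rightarrow> real \<Rightarrow> real" where
  "psi_inv rhomax kv mumax qmin y = rho_inv rhomax kv (y * mu_inv mumax qmin y)"

definition is_equilibrium :: "real \<Rightarrow> real \<Rightarrow> real \<Rightarrow> real \<Rightarrow> real \<Rightarrow> real \<Rightarrow> real \<Rightarrow> real \<Rightarrow> real \<Rightarrow> real \<Rightarrow> real \<Rightarrow> real \<Rightarrow> real \<Rightarrow> real \<Rightarrow> real \<Rightarrow> real \<Rightarrow> bool" where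
  "is_equilibrium s_in gamma beta phimax ks rhomax kv qmin mumax alpha d s e v q c \<longleftrightarrow>
     s \<ge> 0 \<and> e \<ge> 0 \<and> v \<ge> 0 \<and> q \<ge> 0 \<and> c \<ge> 0 \<and> q \<ge> qmin \<and>
     - (1 / gamma) * phi phimax ks s * e + d * (s_in - s) = 0 \<and>
     (1 - alpha) * phi phimax ks s * e - d * e = 0 \<and>
     alpha * beta * phi phimax ks s * e - rho rhomax kv v * c - d * v = 0 \<and>
     rho rhomax kv v - mu mumax qmin q * q = 0 \<and>
     mu mumax qmin q * c - d * c = 0"

end

theory Submission
  imports Defs
begin

lemma phi_inj: assumes "a > 0" "k > 0" shows "inj_on (phi a k) {0..}"
proof (rule inj_onI)
  fix s t assume "s \<in> {0..}" "t \<in> {0..}" "phi a k s = phi a k t"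
  hence "a * s * (k + t) = a * t * (k + s)" using assms by (auto simp: phi_def field_simps)
  hence "a * k * s = a * k * t" by (simp add: algebra_simps)
  thus "s = t" using assms by simp
qed

lemma phi_range: assumes "a > 0" "k > 0" "0 \<le> y" "y < a" shows "y \<in> phi a k ` {0..}"
proof
  show "k * y / (a - y) \<in> {0..}" using assms by auto
  show "y = phi a k (k * y / (a - y))" using assms by (simp add: phi_def field_simps)
qed

lemma phi_bounds: assumes "a > 0" "k > 0" "s \<ge> 0" shows "phi a k s < a"
  using assms by (simp add: phi_def field_simps)

lemma rho_eq_phi: "rho = phi" by (simp add: rho_def phi_def fun_eq_iff)

lemma mu_inj: assumes "m > 0" "qm > 0" shows "inj_on (mu m qm) {qm..}"
proof (rule inj_onI)
  fix s t assume "s \<in> {qm..}" "t \<in> {qm..}" "mu m qm s = mu m qm t"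
  thus "s = t" using assms by (auto simp: mu_def field_simps)
qed

lemma mu_range: assumes "m > 0" "qm > 0" "0 \<le> y" "y < m" shows "y \<in> mu m qm ` {qm..}"
proof
  show "qm * m / (m - y) \<in> {qm..}" using assms by (auto simp: field_simps)
  show "y = mu m qm (qm * m / (m - y))" using assms by (simp add: mu_def field_simps)
qed

lemma key_fwd:
  assumes "qmin > 0" "mumax > 0" "rhomax > 0" "d > 0" "q \<ge> qmin" "mumax * (1 - qmin / q) = d"
    "d * q < rhomax"
  shows "d < psi_max mumax rhomax qmin"
proof -
  have q0: "q > 0" using assms by linarith
  have e: "q * (mumax - d) = mumax * qmin" using assms(6) q0 by (simp add: field_simps)
  have md: "mumax - d > 0" using e q0 assms(1,2) by (metis mult_pos_pos zero_less_mult_pos)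
  have "d * (q * (mumax - d)) < rhomax * (mumax - d)" using assms(7) md
    by (metis mult.assoc mult_strict_right_mono)
  hence "d * qmin * mumax + rhomax * d < rhomax * mumax" using e by (simp add: algebra_simps)
  hence "d * (rhomax + qmin * mumax) < mumax * rhomax" by (simp add: algebra_simps)
  moreover have "rhomax + qmin * mumax > 0" using assms by (simp add: add_pos_pos)
  ultimately show ?thesis unfolding psi_max_def by (simp add: pos_less_divide_eq)
qed

lemma key_bwd:
  assumes "qmin > 0" "mumax > 0" "rhomax > 0" "d > 0" "q \<ge> qmin" "mumax * (1 - qmin / q) = d"
    "d < psi_max mumax rhomax qmin"
  shows "d * q < rhomax"
proof -
  have q0: "q > 0" using assms by linarith
  have e: "q * (mumax - d) = mumax * qmin" using assms(6) q0 by (simp add: field_simps)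
  have md: "mumax - d > 0" using e q0 assms(1,2) by (metis mult_pos_pos zero_less_mult_pos)
  have "rhomax + qmin * mumax > 0" using assms by (simp add: add_pos_pos)
  hence "d * (rhomax + qmin * mumax) < mumax * rhomax" using assms(7)
    unfolding psi_max_def by (simp add: pos_less_divide_eq)
  hence "d * (q * (mumax - d)) < rhomax * (mumax - d)" using e by (simp add: algebra_simps)
  thus ?thesis using md by (simp add: mult.assoc[symmetric])
qed

lemma psi_max_lt: assumes "qmin > 0" "mumax > 0" "rhomax > 0"
  shows "psi_max mumax rhomax qmin < mumax"
proof -
  have p: "rhomax + qmin * mumax > 0" using assms by (simp add: add_pos_pos)
  have "mumax * rhomax < mumax * (rhomax + qmin * mumax)" using assms by (simp add: algebra_simps)
  thus ?thesis unfolding psi_max_def using p by (simp add: pos_divide_less_eq)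
qed

theorem mainTheorem2:
  fixes s_in gamma beta phimax ks rhomax kv qmin mumax alpha d :: real
  assumes "s_in > 0" "gamma > 0" "beta > 0" "phimax > 0" "ks > 0" "rhomax > 0" "kv > 0"
    "qmin > 0" "mumax > 0" "0 < alpha" "alpha < 1" "d > 0"
  defines "sstar \<equiv> phi_inv phimax ks (d / (1 - alpha))"
  defines "estar \<equiv> (1 - alpha) * gamma * (s_in - sstar)"
  defines "vstar \<equiv> psi_inv rhomax kv mumax qmin d"
  defines "qstar \<equiv> mu_inv mumax qmin d"
  defines "vinstar \<equiv> alpha * beta * gamma * (s_in - sstar)"
  defines "cstar \<equiv> (vinstar - vstar) / qstar"
  defines "cond \<equiv> d < min ((1 - alpha) * phimax) (psi_max mumax rhomax qmin) \<and>
      phi_inv phimax ks (d / (1 - alpha)) + psi_inv rhomax kv mumax qmin d / (alpha * beta * gamma) < s_in"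
  shows "((\<exists>s e v q c. is_equilibrium s_in gamma beta phimax ks rhomax kv qmin mumax alpha d s e v q c
             \<and> e > 0 \<and> c > 0) \<longleftrightarrow> cond)
         \<and> (cond \<longrightarrow> (\<forall>s e v q c. (is_equilibrium s_in gamma beta phimax ks rhomax kv qmin mumax alpha d s e v q c
             \<and> e > 0 \<and> c > 0) \<longleftrightarrow> (s, e, v, q, c) = (sstar, estar, vstar, qstar, cstar)))"
proof -
  have abg: "alpha * beta * gamma > 0" using assms by simp
  have fwd: "cond \<and> (s, e, v, q, c) = (sstar, estar, vstar, qstar, cstar)"
    if H: "is_equilibrium s_in gamma beta phimax ks rhomax kv qmin mumax alpha d s e v q c"
      "e > 0" "c > 0" for s e v q c
  proof -
    note E = H(1)[unfolded is_equilibrium_def]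
    have ph: "phi phimax ks s = d / (1 - alpha)"
    proof -
      have "((1 - alpha) * phi phimax ks s - d) * e = 0" using E by (simp add: algebra_simps)
      hence "(1 - alpha) * phi phimax ks s = d" using H(2) by simp
      thus ?thesis using assms(11) by (simp add: field_simps)
    qed
    have mq: "mu mumax qmin q = d"
    proof -
      have "(mu mumax qmin q - d) * c = 0" using E by (simp add: algebra_simps)
      thus ?thesis using H(3) by simp
    qed
    have rv: "rho rhomax kv v = d * q" using E mq by simp
    have s_eq: "s = sstar" unfolding sstar_def phi_inv_def using E ph
      by (metis phi_inj[OF assms(4,5)] the_inv_into_f_f atLeast_iff)
    have q_eq: "q = qstar" unfolding qstar_def mu_inv_def using E mq
      by (metis mu_inj[OF assms(9,8)] the_inv_into_f_f atLeast_iff)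
    have v_eq: "v = vstar" unfolding vstar_def psi_inv_def rho_inv_def using E rv q_eq
      unfolding qstar_def rho_eq_phi
      by (metis phi_inj[OF assms(6,7)] the_inv_into_f_f atLeast_iff)
    have d1: "d < (1 - alpha) * phimax"
      using phi_bounds[OF assms(4,5), of s] E ph assms(11) by (simp add: field_simps)
    have q0: "q > 0" using E assms(8) by linarith
    have d2: "d < psi_max mumax rhomax qmin"
      apply (rule key_fwd[of qmin mumax rhomax d q])
      using assms E mq rv phi_bounds[OF assms(6,7), of v] by (auto simp: mu_def rho_eq_phi)
    have phe: "phi phimax ks s * e = gamma * d * (s_in - s)" using E assms(2)
      by (simp add: field_simps)
    have "alpha * beta * (gamma * d * (s_in - s)) = d * q * c + d * v"
    proof -
      have "alpha * beta * (phi phimax ks s * e) = rho rhomax kv v * c + d * v"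
        using E by (simp add: algebra_simps)
      thus ?thesis unfolding phe rv by (simp add: algebra_simps)
    qed
    hence vin: "alpha * beta * gamma * (s_in - s) = q * c + v"
    proof -
      have "d * (alpha * beta * gamma * (s_in - s)) = d * (q * c + v)"
        using \<open>alpha * beta * (gamma * d * (s_in - s)) = d * q * c + d * v\<close>
        by (simp add: algebra_simps)
      thus ?thesis using assms(12) by simp
    qed
    have "q * c > 0" using q0 H(3) by simp
    hence "v < alpha * beta * gamma * (s_in - s)" using vin by linarith
    hence "v / (alpha * beta * gamma) < s_in - s" using abg by (simp add: pos_divide_less_eq mult.commute)
    hence cnd: cond unfolding cond_def using d1 d2 s_eq v_eq sstar_def vstar_def by simp
    have "e = estar"
    proof -
      have "d / (1 - alpha) * e = gamma * d * (s_in - s)" using phe ph by simp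
      hence "d * e = (1 - alpha) * (gamma * d * (s_in - s))" using assms(11)
        by (simp add: field_simps)
      hence "d * e = d * ((1 - alpha) * gamma * (s_in - s))" by (simp add: algebra_simps)
      thus ?thesis unfolding estar_def using s_eq assms(12) by simp
    qed
    moreover have "c = cstar" unfolding cstar_def vinstar_def using vin s_eq v_eq q_eq q0
      by (simp add: field_simps)
    ultimately show ?thesis using cnd s_eq v_eq q_eq by simp
  qed
  have bwd: "is_equilibrium s_in gamma beta phimax ks rhomax kv qmin mumax alpha d sstar estar vstar qstar cstar
      \<and> estar > 0 \<and> cstar > 0" if C: cond
  proof -
    have d1: "d / (1 - alpha) < phimax" using C assms(11) unfolding cond_def by (simp add: field_simps)
    have d2: "d < psi_max mumax rhomax qmin" using C unfolding cond_def by simp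
    have dm: "d < mumax" using d2 psi_max_lt[OF assms(8,9,6)] by simp
    have rs: "d / (1 - alpha) \<in> phi phimax ks ` {0..}"
      using phi_range[OF assms(4,5) _ d1] assms by simp
    have ps: "phi phimax ks sstar = d / (1 - alpha)" unfolding sstar_def phi_inv_def
      using f_the_inv_into_f[OF phi_inj[OF assms(4,5)] rs] .
    have s0: "sstar \<ge> 0" unfolding sstar_def phi_inv_def
      using the_inv_into_into[OF phi_inj[OF assms(4,5)] rs, of "{0..}"] by simp
    have rq: "d \<in> mu mumax qmin ` {qmin..}" using mu_range[OF assms(9,8) _ dm] assms by simp
    have mq: "mu mumax qmin qstar = d" unfolding qstar_def mu_inv_def
      using f_the_inv_into_f[OF mu_inj[OF assms(9,8)] rq] .
    have q1: "qstar \<ge> qmin" unfolding qstar_def mu_inv_def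
      using the_inv_into_into[OF mu_inj[OF assms(9,8)] rq, of "{qmin..}"] by simp
    have q0: "qstar > 0" using q1 assms(8) by linarith
    have dq: "d * qstar < rhomax"
      using key_bwd[OF assms(8,9,6,12) q1 _ d2] mq by (simp add: mu_def)
    have rv': "d * qstar \<in> phi rhomax kv ` {0..}"
      using phi_range[OF assms(6,7) _ dq] assms q0 by simp
    have vdef: "vstar = the_inv_into {0..} (phi rhomax kv) (d * qstar)"
      unfolding vstar_def psi_inv_def rho_inv_def qstar_def rho_eq_phi ..
    have rv: "rho rhomax kv vstar = d * qstar" unfolding vdef rho_eq_phi
      using f_the_inv_into_f[OF phi_inj[OF assms(6,7)] rv'] .
    have v0: "vstar \<ge> 0" unfolding vdef
      using the_inv_into_into[OF phi_inj[OF assms(6,7)] rv', of "{0..}"] by simp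
    have "sstar + vstar / (alpha * beta * gamma) < s_in" using C unfolding cond_def sstar_def vstar_def by simp
    hence "vstar / (alpha * beta * gamma) < s_in - sstar" by simp
    hence lt: "vstar < alpha * beta * gamma * (s_in - sstar)" using abg by (simp add: pos_divide_less_eq mult.commute)
    have ss: "sstar < s_in" using lt v0 abg
      by (smt (verit, best) mult_nonneg_nonpos mult_pos_pos)
    have e0: "estar > 0" unfolding estar_def using ss assms by simp
    have c0: "cstar > 0" unfolding cstar_def vinstar_def using lt q0 by simp
    have eq1: "- (1 / gamma) * phi phimax ks sstar * estar + d * (s_in - sstar) = 0"
      unfolding ps estar_def using assms by (simp add: field_simps)
    have eq2: "(1 - alpha) * phi phimax ks sstar * estar - d * estar = 0"
      unfolding ps using assms by (simp add: field_simps)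
    have eq3: "alpha * beta * phi phimax ks sstar * estar - rho rhomax kv vstar * cstar - d * vstar = 0"
      unfolding ps rv estar_def cstar_def vinstar_def using assms q0 by (simp add: field_simps)
    show ?thesis unfolding is_equilibrium_def
      using s0 e0 v0 q0 c0 q1 eq1 eq2 eq3 rv mq by simp
  qed
  have A: "(\<exists>s e v q c. is_equilibrium s_in gamma beta phimax ks rhomax kv qmin mumax alpha d s e v q c
             \<and> e > 0 \<and> c > 0) \<longleftrightarrow> cond"
    using fwd bwd by blast
  have B: "cond \<longrightarrow> (\<forall>s e v q c. (is_equilibrium s_in gamma beta phimax ks rhomax kv qmin mumax alpha d s e v q c
             \<and> e > 0 \<and> c > 0) \<longleftrightarrow> (s, e, v, q, c) = (sstar, estar, vstar, qstar, cstar))"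
  proof (intro impI allI iffI)
    fix s e v q c
    assume "is_equilibrium s_in gamma beta phimax ks rhomax kv qmin mumax alpha d s e v q c \<and> 0 < e \<and> 0 < c"
    thus "(s, e, v, q, c) = (sstar, estar, vstar, qstar, cstar)" using fwd by blast
  next
    fix s e v q c
    assume cond "(s, e, v, q, c) = (sstar, estar, vstar, qstar, cstar)"
    thus "is_equilibrium s_in gamma beta phimax ks rhomax kv qmin mumax alpha d s e v q c \<and> 0 < e \<and> 0 < c"
      using bwd by simp
  qed
  show ?thesis using A B by blast
qed

end
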